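(* For any $n\in\mathbb{N}$ with $n\geq2$, the monoid $\mathrm{rps}_n$ is not finitely presented.
   Context: Let $\mathcal{A}_n=\{1<2<\cdots<n\}$. An rPS tableau is a finite (possibly empty) sequence of nonempty bottom-justified columns of boxes filled with positive integers, such that the entries of each column are weakly decreasing from top to bottom and the bottom entries of the columns form a strictly increasing sequence from left to right. Right insertion of a symbol $a$ into an rPS tableau $B$: if $a$ is strictly greater than every entry of the bottom row, append a new column consisting of $a$ at the right end; otherwise, let $z$ be the leftmost bottom-row entry with $z\geq a$ and put $a$ in a new box at the bottom of the column of $z$ (the previous entries of that column move up one box). For $w=w_1\cdots w_k$, $\mathfrak{R}_r(w)$ is obtained by starting with the empty tableau and right-inserting $w_1,\dots,w_k$ in order. The monoid $\mathrm{rps}_n$ is the quotient of the free monoid $\mathcal{A}_n^*$ by the congruence $u\equiv v\iff\mathfrak{R}_r(u)=\mathfrak{R}_r(v)$. *)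

theory Defs
  imports Main
begin

(* An rPS tableau is a list of columns (left to right); each column is a list
   of entries stored BOTTOM-FIRST, i.e. the head of a column is its bottom entry. *)

fun rps_rins :: "nat \<Rightarrow> nat list list \<Rightarrow> nat list list" where
  "rps_rins a [] = [[a]]"
| "rps_rins a (c # cs) = (if a \<le> hd c then (a # c) # cs else c # rps_rins a cs)"

definition rps_tab :: "nat list \<Rightarrow> nat list list" where
  "rps_tab w = foldl (\<lambda>B a. rps_rins a B) [] w"

definition alph :: "nat \<Rightarrow> nat set" where
  "alph n = {1..n}"

definition rps_equiv :: "nat list \<Rightarrow> nat list \<Rightarrow> bool" where
  "rps_equiv u v \<longleftrightarrow> rps_tab u = rps_tab v"

inductive cong_gen :: "('b list \<times> 'b list) set \<Rightarrow> 'b list \<Rightarrow> 'b list \<Rightarrow> bool"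
  for R where
  refl: "cong_gen R u u"
| step: "(l, r) \<in> R \<Longrightarrow> cong_gen R (u @ l @ v) (u @ r @ v)"
| sym: "cong_gen R u v \<Longrightarrow> cong_gen R v u"
| trans: "cong_gen R u v \<Longrightarrow> cong_gen R v w \<Longrightarrow> cong_gen R u w"

definition word_hom :: "('b \<Rightarrow> 'a list) \<Rightarrow> 'b list \<Rightarrow> 'a list" where
  "word_hom f u = concat (map f u)"

(* The monoid M = A-star / eq (eq a congruence on A-star) is finitely presented:
   there exist a finite alphabet X, a finite set of relations R over X, and a monoid
   isomorphism  <X | R>  ->  M.  A homomorphism from <X | R> to M is determined by
   the images of the generators (represented by words f x over A); it is well defined
   and injective iff (u ~_R v <-> f(u) eq f(v)) for all u, v in X-star, and surjective iff
   every element of M is the image of some word over X. *)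
definition finitely_presented_quot ::
  "'a set \<Rightarrow> ('a list \<Rightarrow> 'a list \<Rightarrow> bool) \<Rightarrow> bool" where
  "finitely_presented_quot A eq \<longleftrightarrow>
     (\<exists>(X :: nat set) R f.
        finite X \<and> finite R \<and> R \<subseteq> lists X \<times> lists X \<and>
        (\<forall>x\<in>X. f x \<in> lists A) \<and>
        (\<forall>u\<in>lists X. \<forall>v\<in>lists X. cong_gen R u v \<longleftrightarrow> eq (word_hom f u) (word_hom f v)) \<and>
        (\<forall>w\<in>lists A. \<exists>u\<in>lists X. eq (word_hom f u) w))"

end

theory Submission
  imports Defs "HOL-Library.Multiset"
begin

abbreviation ins where "ins \<equiv> (\<lambda>B a. rps_rins a B)"

lemma mset_rins: "mset (concat (rps_rins a B)) = add_mset a (mset (concat B))"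
  by (induction B) auto

lemma mset_foldl: "mset (concat (foldl ins B w)) = mset (concat B) + mset w"
  by (induction w arbitrary: B) (auto simp: mset_rins)

lemma mset_tab: "mset (concat (rps_tab w)) = mset w"
  by (simp add: rps_tab_def mset_foldl)

lemma word_hom_append[simp]: "word_hom f (u @ v) = word_hom f u @ word_hom f v"
  by (simp add: word_hom_def)

lemma foldl_twos_empty:
  "foldl ins [] (replicate k (2::nat)) = (if k = 0 then [] else [replicate k 2])"
proof (induction k)
  case 0 then show ?case by simp
next
  case (Suc k)
  have r: "replicate (Suc k) (2::nat) = replicate k 2 @ [2]" by (simp add: replicate_append_same)
  have "foldl ins [] (replicate (Suc k) (2::nat)) = ins (foldl ins [] (replicate k 2)) 2"
    by (simp only: r foldl_append) simp
  then show ?case using Suc by (cases k) auto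
qed

lemma foldl_twos_cons:
  assumes "c \<noteq> []" "hd c < 2"
  shows "foldl ins (c # B) (replicate k (2::nat)) = c # foldl ins B (replicate k 2)"
  using assms by (induction k arbitrary: B) auto

lemma tab_form:
  "rps_tab (replicate i 2 @ 1 # replicate k 2) = (1 # replicate i 2) # foldl ins [] (replicate k (2::nat))"
proof -
  have "ins (foldl ins [] (replicate i (2::nat))) 1 = [1 # replicate i 2]"
    by (simp add: foldl_twos_empty)
  then show ?thesis
    by (simp add: rps_tab_def foldl_twos_cons)
qed

lemma tab_twos: "rps_tab (replicate k 2) = foldl ins [] (replicate k (2::nat))"
  by (simp add: rps_tab_def)

lemma len_rins: "length (concat (rps_rins a B)) = Suc (length (concat B))"
  by (induction B) auto

lemma singleton_tab:
  assumes "rps_tab w = [[a]]" shows "w = [a]"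
proof -
  have "mset w = {#a#}" using mset_tab[of w] assms by simp
  then show ?thesis by (cases w) auto
qed

lemma one_form:
  assumes "set t \<subseteq> {1,2::nat}" "count_list t 1 = 0"
  shows "t = replicate (length t) 2"
  using assms by (induction t) auto

lemma count_mset: "count (mset t) x = count_list t x"
  by (induction t) auto

lemma two_form:
  assumes "set t \<subseteq> {1,2::nat}" "count_list t 1 = 1"
  shows "\<exists>i k. t = replicate i 2 @ 1 # replicate k 2"
proof -
  have "1 \<in> set t" using assms(2) by (metis count_list_0_iff zero_neq_one)
  then obtain p q where t: "t = p @ 1 # q" "1 \<notin> set p" by (metis split_list_first)
  have "count_list q 1 = 0" using assms(2) t by (simp add: count_list_0_iff)
  then have "q = replicate (length q) 2" using one_form assms(1) t by auto
  moreover have "p = replicate (length p) 2"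
    using one_form assms(1) t by (simp add: count_list_0_iff)
  ultimately show ?thesis using t by metis
qed

lemma rigid:
  assumes "set s \<subseteq> {1,2::nat}" "count_list s 1 \<le> 1" "rps_tab t = rps_tab s"
  shows "t = s"
proof -
  have ms: "mset t = mset s" using mset_tab[of t] mset_tab[of s] assms(3) by simp
  then have st: "set t = set s" by (metis set_mset_mset)
  have ct: "count_list t 1 = count_list s 1" using ms by (metis count_mset)
  show ?thesis
  proof (cases "count_list s 1 = 0")
    case True
    then show ?thesis using one_form[of s] one_form[of t] assms st ct ms
      by (metis size_mset)
  next
    case False
    then have c1: "count_list s 1 = 1" using assms(2) by simp
    obtain i k where s: "s = replicate i 2 @ 1 # replicate k 2" using two_form assms(1) c1 by blast
    have "set t \<subseteq> {1,2}" using st assms(1) by simp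
    then obtain i' k' where t: "t = replicate i' 2 @ 1 # replicate k' 2" using two_form[of t] c1 ct by auto
    have "i = i'" using assms(3) unfolding s t tab_form by simp
    moreover have "length t = length s" using ms by (metis size_mset)
    ultimately show ?thesis using s t by simp
  qed
qed

lemma factor_ok:
  assumes "p @ s @ q = 1 # replicate b 2 @ [1::nat]" "length s \<le> b"
  shows "set s \<subseteq> {1,2} \<and> count_list s 1 \<le> 1"
proof
  have "set s \<subseteq> set (p @ s @ q)" by auto
  then show "set s \<subseteq> {1,2}" unfolding assms(1) by auto
  have tot: "count_list p 1 + count_list s 1 + count_list q 1 = 2"
    using arg_cong[OF assms(1), of "\<lambda>x. count_list x 1"] by simp
  show "count_list s 1 \<le> 1"
  proof (rule ccontr)
    assume "\<not> ?thesis"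
    then have "count_list p 1 = 0" "count_list q 1 = 0" using tot by auto
    then have "1 \<notin> set p" "1 \<notin> set q" by (auto simp: count_list_0_iff)
    then have "p = []" "q = []" using assms(1)
      by ((cases p; auto), (cases q rule: rev_cases; auto))
    then show False using assms by simp
  qed
qed

lemma invariant:
  assumes "cong_gen R u v"
    and "\<forall>(l,r)\<in>R. rps_tab (word_hom f l) = rps_tab (word_hom f r)
           \<and> length (word_hom f l) \<le> b \<and> length (word_hom f r) \<le> b"
  shows "word_hom f u = 1 # replicate b 2 @ [1] \<longleftrightarrow> word_hom f v = 1 # replicate b 2 @ [1]"
  using assms(1)
proof (induction rule: cong_gen.induct)
  case (step l r u v)
  have h: "rps_tab (word_hom f l) = rps_tab (word_hom f r)"
     "length (word_hom f l) \<le> b" "length (word_hom f r) \<le> b" using assms(2) step by auto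
  show ?case
  proof
    assume a: "word_hom f (u @ l @ v) = 1 # replicate b 2 @ [1]"
    then have fo: "set (word_hom f l) \<subseteq> {1,2} \<and> count_list (word_hom f l) 1 \<le> 1"
      using factor_ok[of "word_hom f u" "word_hom f l"] h by simp
    have "word_hom f r = word_hom f l" using rigid[of "word_hom f l" "word_hom f r"] fo h(1) by simp
    then show "word_hom f (u @ r @ v) = 1 # replicate b 2 @ [1]" using a by simp
  next
    assume a: "word_hom f (u @ r @ v) = 1 # replicate b 2 @ [1]"
    then have fo: "set (word_hom f r) \<subseteq> {1,2} \<and> count_list (word_hom f r) 1 \<le> 1"
      using factor_ok[of "word_hom f u" "word_hom f r"] h by simp
    have "word_hom f l = word_hom f r" using rigid[of "word_hom f r" "word_hom f l"] fo h(1) by simp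
    then show "word_hom f (u @ l @ v) = 1 # replicate b 2 @ [1]" using a by simp
  qed
qed auto

lemma word_hom_rep: "word_hom f u = [c] \<Longrightarrow> word_hom f (concat (replicate b u)) = replicate b c"
  by (induction b) (auto simp: word_hom_def)

theorem proposition3p25:
  fixes n :: nat
  assumes "n \<ge> 2"
  shows "\<not> finitely_presented_quot (alph n) rps_equiv"
proof
  assume "finitely_presented_quot (alph n) rps_equiv"
  then obtain X :: "nat set" and R f where
    fR: "finite R" and RX: "R \<subseteq> lists X \<times> lists X" and
    inj: "\<forall>u\<in>lists X. \<forall>v\<in>lists X. cong_gen R u v \<longleftrightarrow> rps_equiv (word_hom f u) (word_hom f v)" and
    sur: "\<forall>w\<in>lists (alph n). \<exists>u\<in>lists X. rps_equiv (word_hom f u) w"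
    unfolding finitely_presented_quot_def by blast
  have "[1] \<in> lists (alph n)" "[2] \<in> lists (alph n)" using assms by (auto simp: alph_def)
  then obtain u1 u2 where u: "u1 \<in> lists X" "u2 \<in> lists X"
     "rps_equiv (word_hom f u1) [1]" "rps_equiv (word_hom f u2) [2]" using sur by blast
  have f1: "word_hom f u1 = [1]" using u(3) singleton_tab by (simp add: rps_equiv_def rps_tab_def)
  have f2: "word_hom f u2 = [2]" using u(4) singleton_tab by (simp add: rps_equiv_def rps_tab_def)
  define b where "b = Suc (\<Sum>(l,r)\<in>R. length (word_hom f l) + length (word_hom f r))"
  have Rprop: "\<forall>(l,r)\<in>R. rps_tab (word_hom f l) = rps_tab (word_hom f r)
           \<and> length (word_hom f l) \<le> b \<and> length (word_hom f r) \<le> b"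
  proof (intro ballI, clarify)
    fix l r assume lr: "(l, r) \<in> R"
    have "cong_gen R ([] @ l @ []) ([] @ r @ [])" by (rule cong_gen.step[OF lr])
    then have "rps_tab (word_hom f l) = rps_tab (word_hom f r)"
      using inj RX lr by (auto simp: rps_equiv_def)
    moreover have "length (word_hom f l) + length (word_hom f r) \<le>
         (\<Sum>(l,r)\<in>R. length (word_hom f l) + length (word_hom f r))"
      using member_le_sum[OF lr, of "\<lambda>(l,r). length (word_hom f l) + length (word_hom f r)"] fR
      by simp
    ultimately show "rps_tab (word_hom f l) = rps_tab (word_hom f r)
           \<and> length (word_hom f l) \<le> b \<and> length (word_hom f r) \<le> b" unfolding b_def by simp
  qed
  define U where "U = u1 @ concat (replicate b u2) @ u1"
  define V where "V = u1 @ u1 @ concat (replicate b u2)"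
  have fU: "word_hom f U = 1 # replicate b 2 @ [1]" unfolding U_def using f1 f2 word_hom_rep by simp
  have fV: "word_hom f V = 1 # 1 # replicate b 2" unfolding V_def using f1 f2 word_hom_rep by simp
  have UV: "U \<in> lists X" "V \<in> lists X" using u unfolding U_def V_def by auto
  have eqt: "rps_tab (1 # replicate b 2 @ [1::nat]) = rps_tab (1 # 1 # replicate b 2)"
  proof -
    have a: "rps_tab (1 # replicate b 2) = [1] # foldl ins [] (replicate b (2::nat))"
      using tab_form[of 0 b] by simp
    have "rps_tab (1 # replicate b 2 @ [1::nat]) = ins (rps_tab (1 # replicate b 2)) 1"
      by (simp add: rps_tab_def)
    also have "\<dots> = [1,1] # foldl ins [] (replicate b (2::nat))" using a by simp
    also have "\<dots> = rps_tab (1 # 1 # replicate b 2)"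
      by (simp add: rps_tab_def foldl_twos_cons)
    finally show ?thesis .
  qed
  have "cong_gen R U V" using inj UV fU fV eqt by (simp add: rps_equiv_def)
  then have "word_hom f V = 1 # replicate b 2 @ [1]" using invariant[OF _ Rprop] fU by blast
  then show False using fV unfolding b_def by simp
qed

end
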